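(* Let $A$ be a finite-dimensional semisimple $\mathbb Z_2$-graded algebra over $\mathbb C$ and $B\subset A$ a semisimple graded subalgebra. Then the graded centralizer $Z(A,B)$ equals the ordinary centralizer $Z(A_0,B_0)=\{a\in A_0: ab=ba \text{ for all } b\in B_0\}$ of the even part $B_0$ in the even part $A_0$.
   Context: For a $\mathbb Z_2$-graded algebra $A=A_0\oplus A_1$, the parity automorphism $\theta$ acts as $+1$ on $A_0$ and $-1$ on $A_1$. For a graded subalgebra $B$ (with $B_i=B\cap A_i$), the graded centralizer is $Z(A,B)=Z_0(|A|,|B|)+Z_0^\theta(|A|,|B|)$, where $Z_0(|A|,|B|)=\{a\in A_0: ab=ba\ \forall b\in B\}$ and $Z_0^\theta(|A|,|B|)=\{a\in A_0: ab=\theta(b)a\ \forall b\in B\}$. Semisimplicity of a graded algebra: every two-sided graded ideal has a graded complementary two-sided ideal (for finite-dimensional algebras this is equivalent to ordinary semisimplicity). *)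

theory Defs
  imports Complex_Main
begin

text \<open>A (unital, associative) algebra over the complex numbers: the carrier is the
  whole type 'a (a ring with 1), and s is a complex scalar multiplication making 'a a
  complex vector space, compatible with the multiplication.\<close>
definition cplx_algebra :: "(complex \<Rightarrow> 'a::ring_1 \<Rightarrow> 'a) \<Rightarrow> bool" where
  "cplx_algebra s \<longleftrightarrow> vector_space s \<and>
     (\<forall>c x y. s c (x * y) = s c x * y \<and> s c (x * y) = x * s c y)"

definition fin_dim :: "(complex \<Rightarrow> 'a::ring_1 \<Rightarrow> 'a) \<Rightarrow> bool" where
  "fin_dim s \<longleftrightarrow> (\<exists>S. finite S \<and> module.span s S = UNIV)"

definition graded_algebra :: "(complex \<Rightarrow> 'a::ring_1 \<Rightarrow> 'a) \<Rightarrow> 'a set \<Rightarrow> 'a set \<Rightarrow> bool" where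
  "graded_algebra s A0 A1 \<longleftrightarrow> cplx_algebra s \<and>
     module.subspace s A0 \<and> module.subspace s A1 \<and> A0 \<inter> A1 = {0} \<and>
     (\<forall>x. \<exists>u\<in>A0. \<exists>v\<in>A1. x = u + v) \<and>
     (\<forall>x\<in>A0. \<forall>y\<in>A0. x * y \<in> A0) \<and> (\<forall>x\<in>A0. \<forall>y\<in>A1. x * y \<in> A1) \<and>
     (\<forall>x\<in>A1. \<forall>y\<in>A0. x * y \<in> A1) \<and> (\<forall>x\<in>A1. \<forall>y\<in>A1. x * y \<in> A0)"

definition graded_subset :: "'a::ring_1 set \<Rightarrow> 'a set \<Rightarrow> 'a set \<Rightarrow> bool" where
  "graded_subset A0 A1 S \<longleftrightarrow> (\<forall>x\<in>S. \<exists>u\<in>S \<inter> A0. \<exists>v\<in>S \<inter> A1. x = u + v)"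

definition graded_subalgebra :: "(complex \<Rightarrow> 'a::ring_1 \<Rightarrow> 'a) \<Rightarrow> 'a set \<Rightarrow> 'a set \<Rightarrow> 'a set \<Rightarrow> bool" where
  "graded_subalgebra s A0 A1 B \<longleftrightarrow> module.subspace s B \<and> 1 \<in> B \<and>
     (\<forall>x\<in>B. \<forall>y\<in>B. x * y \<in> B) \<and> graded_subset A0 A1 B"

definition ideal_in :: "(complex \<Rightarrow> 'a::ring_1 \<Rightarrow> 'a) \<Rightarrow> 'a set \<Rightarrow> 'a set \<Rightarrow> bool" where
  "ideal_in s B I \<longleftrightarrow> module.subspace s I \<and> I \<subseteq> B \<and>
     (\<forall>b\<in>B. \<forall>x\<in>I. b * x \<in> I \<and> x * b \<in> I)"

definition graded_semisimple :: "(complex \<Rightarrow> 'a::ring_1 \<Rightarrow> 'a) \<Rightarrow> 'a set \<Rightarrow> 'a set \<Rightarrow> 'a set \<Rightarrow> bool" where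
  "graded_semisimple s A0 A1 B \<longleftrightarrow>
     (\<forall>I. ideal_in s B I \<and> graded_subset A0 A1 I \<longrightarrow>
        (\<exists>J. ideal_in s B J \<and> graded_subset A0 A1 J \<and> I \<inter> J = {0} \<and>
             B = {x + y | x y. x \<in> I \<and> y \<in> J}))"

text \<open>Parity automorphism theta: +1 on A0, -1 on A1.\<close>
definition even_part :: "'a::ring_1 set \<Rightarrow> 'a set \<Rightarrow> 'a \<Rightarrow> 'a" where
  "even_part A0 A1 x = (THE u. u \<in> A0 \<and> x - u \<in> A1)"

definition parity :: "'a::ring_1 set \<Rightarrow> 'a set \<Rightarrow> 'a \<Rightarrow> 'a" where
  "parity A0 A1 x = even_part A0 A1 x - (x - even_part A0 A1 x)"

definition Z0 :: "'a::ring_1 set \<Rightarrow> 'a set \<Rightarrow> 'a set" where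
  "Z0 A0 B = {a \<in> A0. \<forall>b\<in>B. a * b = b * a}"

definition Z0_theta :: "'a::ring_1 set \<Rightarrow> 'a set \<Rightarrow> 'a set \<Rightarrow> 'a set" where
  "Z0_theta A0 A1 B = {a \<in> A0. \<forall>b\<in>B. a * b = parity A0 A1 b * a}"

definition graded_centralizer :: "'a::ring_1 set \<Rightarrow> 'a set \<Rightarrow> 'a set \<Rightarrow> 'a set" where
  "graded_centralizer A0 A1 B = {x + y | x y. x \<in> Z0 A0 B \<and> y \<in> Z0_theta A0 A1 B}"

end

theory Submission
  imports Defs
begin

theorem mainTheorem2:
  fixes s :: "complex \<Rightarrow> 'a::ring_1 \<Rightarrow> 'a" and A0 A1 B :: "'a set"
  assumes "graded_algebra s A0 A1"
    and "fin_dim s"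
    and "graded_semisimple s A0 A1 UNIV"
    and "graded_subalgebra s A0 A1 B"
    and "graded_semisimple s A0 A1 B"
  shows "graded_centralizer A0 A1 B = {a \<in> A0. \<forall>b \<in> B \<inter> A0. a * b = b * a}"
proof -
  have ca: "cplx_algebra s" using assms(1) by (simp add: graded_algebra_def)
  then have vs: "vector_space s" and comp: "\<And>c x y. s c (x * y) = s c x * y" "\<And>c x y. s c (x * y) = x * s c y"
    using ca unfolding cplx_algebra_def by blast+
  interpret V: vector_space s by (rule vs)
  have sA0: "V.subspace A0" and sA1: "V.subspace A1" and A01: "A0 \<inter> A1 = {0}"
    and dec: "\<And>x. \<exists>u\<in>A0. \<exists>v\<in>A1. x = u + v"
    and m00: "\<And>x y. x \<in> A0 \<Longrightarrow> y \<in> A0 \<Longrightarrow> x * y \<in> A0"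
    and m01: "\<And>x y. x \<in> A0 \<Longrightarrow> y \<in> A1 \<Longrightarrow> x * y \<in> A1"
    and m10: "\<And>x y. x \<in> A1 \<Longrightarrow> y \<in> A0 \<Longrightarrow> x * y \<in> A1"
    and m11: "\<And>x y. x \<in> A1 \<Longrightarrow> y \<in> A1 \<Longrightarrow> x * y \<in> A0"
    using assms(1) unfolding graded_algebra_def by blast+
  have sB: "V.subspace B" and oneB: "1 \<in> B" and mB: "\<And>x y. x \<in> B \<Longrightarrow> y \<in> B \<Longrightarrow> x * y \<in> B"
    and gB: "\<And>x. x \<in> B \<Longrightarrow> \<exists>u\<in>B \<inter> A0. \<exists>v\<in>B \<inter> A1. x = u + v"
    using assms(4) unfolding graded_subalgebra_def graded_subset_def by blast+
  have uniq: "\<And>u v u' v'. u \<in> A0 \<Longrightarrow> u' \<in> A0 \<Longrightarrow> v \<in> A1 \<Longrightarrow> v' \<in> A1 \<Longrightarrow> u + v = u' + v' \<Longrightarrow> u = u' \<and> v = v'"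
  proof -
    fix u v u' v' assume h: "u \<in> A0" "u' \<in> A0" "v \<in> A1" "v' \<in> A1" "u + v = u' + v'"
    have "u - u' = v' - v" using h(5) by (simp add: algebra_simps)
    moreover have "u - u' \<in> A0" using V.subspace_diff[OF sA0 h(1,2)] .
    moreover have "v' - v \<in> A1" using V.subspace_diff[OF sA1 h(4,3)] .
    ultimately have "v' - v \<in> A0 \<inter> A1" "u - u' = v' - v" by auto
    then have "v' - v = 0" "u - u' = v' - v" using A01 by auto
    then have "u - u' = 0" "v' - v = 0" by simp_all
    then show "u = u' \<and> v = v'" by simp
  qed
  have one0: "1 \<in> A0"
  proof -
    obtain u v where uv: "u \<in> A0" "v \<in> A1" "1 = u + v" using dec by blast
    have vv: "v * u \<in> A1" "v * v \<in> A0" "u * u \<in> A0" "u * v \<in> A1"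
      using m10 m11 m00 m01 uv(1,2) by blast+
    have z0: "0 \<in> A0" "0 \<in> A1" using V.subspace_0 sA0 sA1 by blast+
    have "v = v * (u + v)" by (simp add: uv(3)[symmetric])
    then have "0 + v = v * v + v * u" by (simp add: distrib_left add.commute)
    then have e1: "v * v = 0" using uniq[OF z0(1) vv(2) uv(2) vv(1)] by metis
    have "u = u * (u + v)" by (simp add: uv(3)[symmetric])
    then have "u + 0 = u * u + u * v" by (simp add: distrib_left)
    then have e2: "u * v = 0" using uniq[OF uv(1) vv(3) z0(2) vv(4)] by metis
    have "v = (u + v) * v" by (simp add: uv(3)[symmetric])
    then have "v = u * v + v * v" by (simp add: distrib_right)
    then have "v = 0" using e1 e2 by simp
    then show ?thesis using uv by simp
  qed
  have par: "\<And>b u v. u \<in> A0 \<Longrightarrow> v \<in> A1 \<Longrightarrow> b = u + v \<Longrightarrow> parity A0 A1 b = u - v"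
  proof -
    fix b u v assume h: "u \<in> A0" "v \<in> A1" "b = u + v"
    have "even_part A0 A1 b = u" unfolding even_part_def
    proof (rule the_equality)
      show "u \<in> A0 \<and> b - u \<in> A1" using h(1,2) unfolding h(3) by simp
    next
      fix w assume w: "w \<in> A0 \<and> b - w \<in> A1"
      have "w + (b - w) = u + v" unfolding h(3) by simp
      from uniq[OF conjunct1[OF w] h(1) conjunct2[OF w] h(2) this] show "w = u" by blast
    qed
    then show "parity A0 A1 b = u - v" unfolding parity_def h(3) by simp
  qed
  show ?thesis
  proof
    show "graded_centralizer A0 A1 B \<subseteq> {a \<in> A0. \<forall>b \<in> B \<inter> A0. a * b = b * a}"
    proof
      fix z assume "z \<in> graded_centralizer A0 A1 B"
      then obtain x y where z: "z = x + y" "x \<in> Z0 A0 B" "y \<in> Z0_theta A0 A1 B"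
        unfolding graded_centralizer_def by blast
      have "z \<in> A0" using z V.subspace_add[OF sA0] unfolding Z0_def Z0_theta_def by blast
      moreover have "\<forall>b \<in> B \<inter> A0. z * b = b * z"
      proof
        fix b assume b: "b \<in> B \<inter> A0"
        have "parity A0 A1 b = b" using par[of b 0 b] b V.subspace_0[OF sA1] by simp
        then show "z * b = b * z" using z b unfolding Z0_def Z0_theta_def
          by (simp add: distrib_left distrib_right)
      qed
      ultimately show "z \<in> {a \<in> A0. \<forall>b \<in> B \<inter> A0. a * b = b * a}" by blast
    qed
  next
    show "{a \<in> A0. \<forall>b \<in> B \<inter> A0. a * b = b * a} \<subseteq> graded_centralizer A0 A1 B"

    proof
      fix a assume "a \<in> {a \<in> A0. \<forall>b \<in> B \<inter> A0. a * b = b * a}"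
      then have aA0: "a \<in> A0" and ac: "\<And>b. b \<in> B \<inter> A0 \<Longrightarrow> a * b = b * a" by auto
      define B1 where "B1 = B \<inter> A1"
      define G where "G = {u * v | u v. u \<in> B1 \<and> v \<in> B1}"
      define I where "I = V.span (B1 \<union> G)"
      have B1B: "B1 \<subseteq> B" "B1 \<subseteq> A1" by (auto simp: B1_def)
      have GB: "G \<subseteq> B" "G \<subseteq> A0" using mB m11 by (auto simp: G_def B1_def)
      have "B1 \<union> G \<subseteq> B" using B1B GB by blast
      then have IB: "I \<subseteq> B" unfolding I_def using V.span_minimal[OF _ sB] by blast
      have sI: "V.subspace I" unfolding I_def by simp
      have B1I: "B1 \<subseteq> I" and GI: "G \<subseteq> I" unfolding I_def using V.span_superset by blast+
      have Gin: "\<And>u v. u \<in> B1 \<Longrightarrow> v \<in> B1 \<Longrightarrow> u * v \<in> G" unfolding G_def by blast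
      have B00: "\<And>x y. x \<in> B \<inter> A0 \<Longrightarrow> y \<in> B \<inter> A0 \<Longrightarrow> x * y \<in> B \<inter> A0" using mB m00 by blast
      have B01: "\<And>x y. x \<in> B \<inter> A0 \<Longrightarrow> y \<in> B1 \<Longrightarrow> x * y \<in> B1" using mB m01 by (auto simp: B1_def)
      have B10: "\<And>x y. x \<in> B1 \<Longrightarrow> y \<in> B \<inter> A0 \<Longrightarrow> x * y \<in> B1" using mB m10 by (auto simp: B1_def)
      have B11: "\<And>x y. x \<in> B1 \<Longrightarrow> y \<in> B1 \<Longrightarrow> x * y \<in> B \<inter> A0" using mB m11 by (auto simp: B1_def)
      have idI: "b * x \<in> I \<and> x * b \<in> I" if b: "b \<in> B" and x: "x \<in> I" for b x
      proof -
        obtain b0 b1 where bb: "b0 \<in> B \<inter> A0" "b1 \<in> B1" "b = b0 + b1" using gB[OF b] unfolding B1_def by blast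
        have gen: "b * g \<in> I \<and> g * b \<in> I" if g: "g \<in> B1 \<union> G" for g
        proof (cases "g \<in> B1")
          case True
          have "b0 * g \<in> I" "b1 * g \<in> I" "g * b0 \<in> I" "g * b1 \<in> I"
            using B01[OF bb(1) True] Gin[OF bb(2) True] B10[OF True bb(1)] Gin[OF True bb(2)] B1I GI by blast+
          then show ?thesis unfolding bb(3) distrib_left distrib_right using V.subspace_add[OF sI] by blast
        next
          case False
          then obtain u v where uv: "u \<in> B1" "v \<in> B1" "g = u * v" using g G_def by blast
          have "b0 * u * v \<in> I" using Gin[OF B01[OF bb(1) uv(1)] uv(2)] GI by blast
          moreover have "b1 * u * v \<in> I" using B01[OF B11[OF bb(2) uv(1)] uv(2)] B1I by blast
          moreover have "u * (v * b0) \<in> I" using Gin[OF uv(1) B10[OF uv(2) bb(1)]] GI by blast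
          moreover have "u * (v * b1) \<in> I" using B10[OF uv(1) B11[OF uv(2) bb(2)]] B1I by blast
          ultimately show ?thesis unfolding bb(3) uv(3) distrib_left distrib_right mult.assoc
            using V.subspace_add[OF sI] by (simp add: mult.assoc)
        qed
        have "x \<in> {x. b * x \<in> I \<and> x * b \<in> I}"
        proof (rule V.span_subspace_induct[OF x[unfolded I_def]])
          show "V.subspace {x. b * x \<in> I \<and> x * b \<in> I}"
          proof (rule V.subspaceI)
            show "0 \<in> {x. b * x \<in> I \<and> x * b \<in> I}" using V.subspace_0[OF sI] by simp
          next
            fix x y assume "x \<in> {x. b * x \<in> I \<and> x * b \<in> I}" "y \<in> {x. b * x \<in> I \<and> x * b \<in> I}"
            then show "x + y \<in> {x. b * x \<in> I \<and> x * b \<in> I}"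
              using V.subspace_add[OF sI] by (simp add: distrib_left distrib_right)
          next
            fix c x assume "x \<in> {x. b * x \<in> I \<and> x * b \<in> I}"
            then show "s c x \<in> {x. b * x \<in> I \<and> x * b \<in> I}"
              using V.subspace_scale[OF sI] comp[of c] by (metis mem_Collect_eq)
          qed
        next
          fix g assume "g \<in> B1 \<union> G" then show "g \<in> {x. b * x \<in> I \<and> x * b \<in> I}" using gen by blast
        qed
        then show ?thesis by simp
      qed
      have gI: "\<exists>u\<in>I \<inter> A0. \<exists>v\<in>I \<inter> A1. x = u + v" if x: "x \<in> I" for x
      proof -
        have "x \<in> {x. \<exists>u\<in>I \<inter> A0. \<exists>v\<in>I \<inter> A1. x = u + v}"
        proof (rule V.span_subspace_induct[OF x[unfolded I_def]])
          show "V.subspace {x. \<exists>u\<in>I \<inter> A0. \<exists>v\<in>I \<inter> A1. x = u + v}"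
          proof (rule V.subspaceI)
            show "0 \<in> {x. \<exists>u\<in>I \<inter> A0. \<exists>v\<in>I \<inter> A1. x = u + v}"
              using V.subspace_0[OF sI] V.subspace_0[OF sA0] V.subspace_0[OF sA1] by force
          next
            fix x y assume "x \<in> {x. \<exists>u\<in>I \<inter> A0. \<exists>v\<in>I \<inter> A1. x = u + v}" "y \<in> {x. \<exists>u\<in>I \<inter> A0. \<exists>v\<in>I \<inter> A1. x = u + v}"
            then obtain u v u' v' where h: "u \<in> I \<inter> A0" "v \<in> I \<inter> A1" "x = u + v" "u' \<in> I \<inter> A0" "v' \<in> I \<inter> A1" "y = u' + v'" by blast
            have "x + y = (u + u') + (v + v')" using h(3,6) by (simp add: algebra_simps)
            moreover have "u + u' \<in> I \<inter> A0" "v + v' \<in> I \<inter> A1"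
              using h V.subspace_add[OF sI] V.subspace_add[OF sA0] V.subspace_add[OF sA1] by blast+
            ultimately show "x + y \<in> {x. \<exists>u\<in>I \<inter> A0. \<exists>v\<in>I \<inter> A1. x = u + v}" by blast
          next
            fix c x assume "x \<in> {x. \<exists>u\<in>I \<inter> A0. \<exists>v\<in>I \<inter> A1. x = u + v}"
            then obtain u v where h: "u \<in> I \<inter> A0" "v \<in> I \<inter> A1" "x = u + v" by blast
            have "s c x = s c u + s c v" using h(3) by (simp add: V.scale_right_distrib)
            moreover have "s c u \<in> I \<inter> A0" "s c v \<in> I \<inter> A1"
              using h V.subspace_scale[OF sI] V.subspace_scale[OF sA0] V.subspace_scale[OF sA1] by blast+
            ultimately show "s c x \<in> {x. \<exists>u\<in>I \<inter> A0. \<exists>v\<in>I \<inter> A1. x = u + v}" by blast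
          qed
        next
          fix g assume g: "g \<in> B1 \<union> G"
          show "g \<in> {x. \<exists>u\<in>I \<inter> A0. \<exists>v\<in>I \<inter> A1. x = u + v}"
          proof (cases "g \<in> B1")
            case True
            then have "0 \<in> I \<inter> A0" "g \<in> I \<inter> A1" "g = 0 + g" using B1I B1B V.subspace_0[OF sI] V.subspace_0[OF sA0] by auto
            then show ?thesis by blast
          next
            case False
            then have "g \<in> I \<inter> A0" "0 \<in> I \<inter> A1" "g = g + 0" using g GI GB V.subspace_0[OF sI] V.subspace_0[OF sA1] by auto
            then show ?thesis by blast
          qed
        qed
        then show ?thesis by simp
      qed
      have "ideal_in s B I" unfolding ideal_in_def using sI IB idI by blast
      moreover have "graded_subset A0 A1 I" unfolding graded_subset_def using gI by blast
      ultimately obtain J where J: "ideal_in s B J" "graded_subset A0 A1 J" "I \<inter> J = {0}"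
          "B = {x + y | x y. x \<in> I \<and> y \<in> J}"
        using assms(5)[unfolded graded_semisimple_def, rule_format, of I] by blast
      have sJ: "V.subspace J" and JB: "J \<subseteq> B" and idJ: "\<And>b x. b \<in> B \<Longrightarrow> x \<in> J \<Longrightarrow> b * x \<in> J \<and> x * b \<in> J"
        using J(1) unfolding ideal_in_def by blast+
      have gJ: "\<And>x. x \<in> J \<Longrightarrow> \<exists>u\<in>J \<inter> A0. \<exists>v\<in>J \<inter> A1. x = u + v"
        using J(2) unfolding graded_subset_def by blast
      have "1 \<in> {x + y | x y. x \<in> I \<and> y \<in> J}" using oneB J(4) by simp
      then obtain e f where ef: "e \<in> I" "f \<in> J" "1 = e + f" by blast
      have prod0: "i * j = 0 \<and> j * i = 0" if "i \<in> I" "j \<in> J" for i j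
      proof -
        have "i * j \<in> I" "j * i \<in> I" using idI[of j i] that JB by blast+
        moreover have "i * j \<in> J" "j * i \<in> J" using idJ[of i j] that IB by blast+
        ultimately show ?thesis using J(3) by blast
      qed
      have fA0: "f \<in> A0"
      proof -
        obtain f0 f1 where h: "f0 \<in> J \<inter> A0" "f1 \<in> J \<inter> A1" "f = f0 + f1" using gJ[OF ef(2)] by blast
        have "f1 \<in> I" using h(2) JB B1I B1_def by blast
        then have "f1 = 0" using h(2) J(3) by blast
        then show ?thesis using h by simp
      qed
      have fB: "f \<in> B" using ef(2) JB by blast
      have eeq: "e = 1 - f" using ef(3) by (simp add: algebra_simps)
      have eA0: "e \<in> A0" unfolding eeq using V.subspace_diff[OF sA0 one0 fA0] .
      have fcent: "b * f = f * b" if b: "b \<in> B" for b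
      proof -
        have "b * e + b * f = e * b + f * b"
          by (metis ef(3) distrib_left distrib_right mult_1_left mult_1_right)
        then have eq: "b * e - e * b = f * b - b * f" by (simp add: algebra_simps)
        have "b * e - e * b \<in> I" using idI[OF b ef(1)] V.subspace_diff[OF sI] by blast
        moreover have "f * b - b * f \<in> J" using idJ[OF b ef(2)] V.subspace_diff[OF sJ] by blast
        ultimately have "f * b - b * f = 0" using eq J(3) by (metis IntI singletonD)
        then show ?thesis by simp
      qed
      have fb1: "f * b = 0 \<and> b * f = 0" if "b \<in> B1" for b using prod0[of b f] that B1I ef(2) by blast
      have eb1: "e * b = b \<and> b * e = b" if "b \<in> B1" for b
      proof -
        have "b = (e + f) * b" "b = b * (e + f)" using ef(3)[symmetric] by simp_all
        then show ?thesis using fb1[OF that] by (simp add: distrib_left distrib_right)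
      qed
      define S where "S = V.span G"
      have eS: "e \<in> S"
      proof -
        have "e \<in> {x + y | x y. x \<in> V.span B1 \<and> y \<in> V.span G}" using ef(1) unfolding I_def V.span_Un .
        then obtain x y where h: "x \<in> V.span B1" "y \<in> V.span G" "e = x + y" by blast
        have "V.span B1 \<subseteq> A1" using V.span_minimal[OF B1B(2) sA1] .
        moreover have "V.span G \<subseteq> A0" using V.span_minimal[OF GB(2) sA0] .
        ultimately have "x \<in> A1" "y \<in> A0" using h by blast+
        moreover have "x = e - y" using h(3) by simp
        ultimately have "x \<in> A0 \<inter> A1" using V.subspace_diff[OF sA0 eA0] by blast
        then have "x = 0" using A01 by blast
        then show ?thesis using h S_def by simp
      qed
      define Q where "Q = {z. \<exists>p. p \<in> A0 \<and> (\<forall>b\<in>B1. b * p = a * b * z \<and> p * b = z * b * a) \<and> f * p = 0 \<and> p * f = 0}"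
      have "e \<in> Q"
      proof (rule V.span_subspace_induct[OF eS[unfolded S_def]])
        show "V.subspace Q"
        proof (rule V.subspaceI)
          show "0 \<in> Q" unfolding Q_def using V.subspace_0[OF sA0] by force
        next
          fix x y assume "x \<in> Q" "y \<in> Q"
          then obtain p q where p: "p \<in> A0" "\<forall>b\<in>B1. b * p = a * b * x \<and> p * b = x * b * a" "f * p = 0" "p * f = 0"
            and q: "q \<in> A0" "\<forall>b\<in>B1. b * q = a * b * y \<and> q * b = y * b * a" "f * q = 0" "q * f = 0"
            unfolding Q_def by blast
          have "p + q \<in> A0" using V.subspace_add[OF sA0 p(1) q(1)] .
          moreover have "\<forall>b\<in>B1. b * (p + q) = a * b * (x + y) \<and> (p + q) * b = (x + y) * b * a"
            using p(2) q(2) by (simp add: distrib_left distrib_right)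
          moreover have "f * (p + q) = 0" "(p + q) * f = 0" using p q by (simp_all add: distrib_left distrib_right)
          ultimately show "x + y \<in> Q" unfolding Q_def by blast
        next
          fix c x assume "x \<in> Q"
          then obtain p where p: "p \<in> A0" "\<forall>b\<in>B1. b * p = a * b * x \<and> p * b = x * b * a" "f * p = 0" "p * f = 0"
            unfolding Q_def by blast
          have "s c p \<in> A0" using V.subspace_scale[OF sA0 p(1)] .
          moreover have "\<forall>b\<in>B1. b * s c p = a * b * s c x \<and> s c p * b = s c x * b * a"
          proof
            fix b assume b: "b \<in> B1"
            have "b * s c p = s c (b * p)" by (simp add: comp(2))
            also have "\<dots> = s c (a * b * x)" using p(2) b by simp
            also have "\<dots> = a * b * s c x" by (simp add: comp(2))
            finally have 1: "b * s c p = a * b * s c x" .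
            have "s c p * b = s c (p * b)" by (simp add: comp(1))
            also have "\<dots> = s c (x * b * a)" using p(2) b by simp
            also have "\<dots> = s c x * b * a" by (simp add: comp(1) mult.assoc)
            finally show "b * s c p = a * b * s c x \<and> s c p * b = s c x * b * a" using 1 by simp
          qed
          moreover have "f * s c p = 0" "s c p * f = 0"
            using p(3,4) comp[of c] by (metis V.scale_zero_right)+
          ultimately show "s c x \<in> Q" unfolding Q_def by blast
        qed
      next
        fix g assume "g \<in> G"
        then obtain u v where uv: "u \<in> B1" "v \<in> B1" "g = u * v" unfolding G_def by blast
        have "u * a * v \<in> A0" using m11[OF m10[OF _ aA0] ] uv B1B by blast
        moreover have "\<forall>b\<in>B1. b * (u * a * v) = a * b * g \<and> (u * a * v) * b = g * b * a"
        proof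
          fix b assume b: "b \<in> B1"
          have "b * (u * a * v) = (b * u) * a * v" by (simp add: mult.assoc)
          also have "\<dots> = a * (b * u) * v" using ac[OF B11[OF b uv(1)]] by simp
          finally have 1: "b * (u * a * v) = a * b * g" unfolding uv(3) by (simp add: mult.assoc)
          have "(u * a * v) * b = u * (a * (v * b))" by (simp add: mult.assoc)
          also have "\<dots> = u * ((v * b) * a)" using ac[OF B11[OF uv(2) b]] by simp
          finally show "b * (u * a * v) = a * b * g \<and> (u * a * v) * b = g * b * a"
            using 1 unfolding uv(3) by (simp add: mult.assoc)
        qed
        moreover have "f * (u * a * v) = 0" "(u * a * v) * f = 0"
          using fb1 uv by (simp_all add: mult.assoc[symmetric]) (simp add: mult.assoc)
        ultimately show "g \<in> Q" unfolding Q_def by blast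
      qed
      then obtain p where p: "p \<in> A0" "\<And>b. b \<in> B1 \<Longrightarrow> b * p = a * b * e \<and> p * b = e * b * a"
          "f * p = 0" "p * f = 0" unfolding Q_def by blast
      have pb1: "b * p = a * b \<and> p * b = b * a" if "b \<in> B1" for b
        using p(2)[OF that] eb1[OF that] by (simp add: mult.assoc)
      define R where "R = {z. \<forall>b0\<in>B \<inter> A0. p * (b0 * z) = (b0 * z) * p}"
      have "e \<in> R"
      proof (rule V.span_subspace_induct[OF eS[unfolded S_def]])
        show "V.subspace R"
        proof (rule V.subspaceI)
          show "0 \<in> R" unfolding R_def by simp
        next
          fix x y assume "x \<in> R" "y \<in> R"
          then show "x + y \<in> R" unfolding R_def by (simp add: distrib_left distrib_right)
        next
          fix c x assume x: "x \<in> R"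
          show "s c x \<in> R" unfolding R_def
          proof (intro CollectI ballI)
            fix b0 assume b0: "b0 \<in> B \<inter> A0"
            have "p * (b0 * s c x) = s c (p * (b0 * x))" by (simp add: comp(2))
            also have "\<dots> = s c ((b0 * x) * p)" using x b0 R_def by simp
            also have "\<dots> = (b0 * s c x) * p" by (simp add: comp(1) comp(2)[symmetric])
            finally show "p * (b0 * s c x) = (b0 * s c x) * p" .
          qed
        qed
      next
        fix g assume "g \<in> G"
        then obtain u v where uv: "u \<in> B1" "v \<in> B1" "g = u * v" unfolding G_def by blast
        show "g \<in> R" unfolding R_def
        proof (intro CollectI ballI)
          fix b0 assume b0: "b0 \<in> B \<inter> A0"
          have w: "b0 * u \<in> B1" using B01[OF b0 uv(1)] .
          have "p * (b0 * g) = (p * (b0 * u)) * v" unfolding uv(3) by (simp add: mult.assoc)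
          also have "\<dots> = (b0 * u) * (a * v)" using pb1[OF w] by (simp add: mult.assoc)
          also have "\<dots> = (b0 * u) * (v * p)" using pb1[OF uv(2)] by simp
          also have "\<dots> = (b0 * g) * p" unfolding uv(3) by (simp add: mult.assoc)
          finally show "p * (b0 * g) = (b0 * g) * p" .
        qed
      qed
      have pb0: "p * b0 = b0 * p" if b0: "b0 \<in> B \<inter> A0" for b0
      proof -
        have "p * b0 = p * (b0 * (e + f))" using ef(3)[symmetric] by simp
        also have "\<dots> = p * (b0 * e) + (p * f) * b0" using fcent[of b0] b0
          by (simp add: distrib_left mult.assoc)
        also have "\<dots> = (b0 * e) * p" using \<open>e \<in> R\<close> b0 p(4) R_def by simp
        also have "\<dots> = b0 * ((e + f) * p)" using p(3) by (simp add: distrib_left distrib_right mult.assoc)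
        also have "\<dots> = b0 * p" using ef(3)[symmetric] by simp
        finally show ?thesis .
      qed
      have afA0: "a * f \<in> A0" using m00[OF aA0 fA0] .
      have af_b0: "a * f * b0 = b0 * (a * f)" if b0: "b0 \<in> B \<inter> A0" for b0
      proof -
        have "a * f * b0 = a * (b0 * f)" using fcent[of b0] b0 by (simp add: mult.assoc)
        also have "\<dots> = b0 * (a * f)" using ac[OF b0] by (simp add: mult.assoc[symmetric])
        finally show ?thesis .
      qed
      have af_b1: "a * f * b1 = 0 \<and> b1 * (a * f) = 0" if b1: "b1 \<in> B1" for b1
      proof -
        have "a * f = f * a" using ac[of f] fB fA0 by simp
        then show ?thesis using fb1[OF b1] by (metis mult.assoc mult_zero_left mult_zero_right)
      qed
      have aeq: "a * e = a - a * f" using ef(3) by (metis add_diff_cancel_right' distrib_left mult_1_right)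
      have ae_b0: "a * e * b0 = b0 * (a * e)" if b0: "b0 \<in> B \<inter> A0" for b0
        unfolding aeq using ac[OF b0] af_b0[OF b0] by (simp add: left_diff_distrib right_diff_distrib)
      have ae_b1: "a * e * b1 = a * b1 \<and> b1 * (a * e) = b1 * a" if b1: "b1 \<in> B1" for b1
        using eb1[OF b1] af_b1[OF b1] unfolding aeq by (simp add: mult.assoc right_diff_distrib left_diff_distrib)
      have aeA0: "a * e \<in> A0" using m00[OF aA0 eA0] .
      define x where "x = s (1/2) (a * e + p)"
      define y where "y = s (1/2) (a * e - p)"
      have xA0: "x \<in> A0" unfolding x_def using V.subspace_scale[OF sA0 V.subspace_add[OF sA0 aeA0 p(1)]] .
      have yA0: "y \<in> A0" unfolding y_def using V.subspace_scale[OF sA0 V.subspace_diff[OF sA0 aeA0 p(1)]] .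
      have xcomm: "x * b = b * x" if b: "b \<in> B" for b
      proof -
        obtain b0 b1 where bb: "b0 \<in> B \<inter> A0" "b1 \<in> B1" "b = b0 + b1" using gB[OF b] unfolding B1_def by blast
        have "(a * e + p) * b = b * (a * e + p)"
          unfolding bb(3) using ae_b0[OF bb(1)] pb0[OF bb(1)] ae_b1[OF bb(2)] pb1[OF bb(2)]
          by (simp add: distrib_left distrib_right)
        then show ?thesis unfolding x_def by (metis comp)
      qed
      have ycomm: "y * b = parity A0 A1 b * y" if b: "b \<in> B" for b
      proof -
        obtain b0 b1 where bb: "b0 \<in> B \<inter> A0" "b1 \<in> B1" "b = b0 + b1" using gB[OF b] unfolding B1_def by blast
        have pb: "parity A0 A1 b = b0 - b1" using par[OF _ _ bb(3)] bb(1,2) B1_def by blast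
        have "(a * e - p) * b = (b0 - b1) * (a * e - p)"
          unfolding bb(3) using ae_b0[OF bb(1)] pb0[OF bb(1)] ae_b1[OF bb(2)] pb1[OF bb(2)]
          by (simp add: distrib_left distrib_right left_diff_distrib right_diff_distrib)
        then show ?thesis unfolding y_def pb by (metis comp)
      qed
      have "a * f + x \<in> Z0 A0 B" unfolding Z0_def
      proof (intro CollectI conjI ballI)
        show "a * f + x \<in> A0" using V.subspace_add[OF sA0 afA0 xA0] .
      next
        fix b assume b: "b \<in> B"
        obtain b0 b1 where bb: "b0 \<in> B \<inter> A0" "b1 \<in> B1" "b = b0 + b1" using gB[OF b] unfolding B1_def by blast
        have "a * f * b = b * (a * f)" unfolding bb(3) using af_b0[OF bb(1)] af_b1[OF bb(2)]
          by (simp add: distrib_left distrib_right)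
        then show "(a * f + x) * b = b * (a * f + x)" using xcomm[OF b] by (simp add: distrib_left distrib_right)
      qed
      moreover have "y \<in> Z0_theta A0 A1 B" unfolding Z0_theta_def using yA0 ycomm by blast
      moreover have "a = (a * f + x) + y"
      proof -
        have "x + y = s (1/2) (a * e) + s (1/2) (a * e)" unfolding x_def y_def
          by (simp add: V.scale_right_distrib V.scale_right_diff_distrib)
        also have "\<dots> = s (1/2 + 1/2) (a * e)" by (simp only: V.scale_left_distrib)
        also have "\<dots> = a * e" by simp
        finally have "x + y = a * e" .
        then show ?thesis unfolding aeq by (simp add: add.assoc)
      qed
      ultimately show "a \<in> graded_centralizer A0 A1 B" unfolding graded_centralizer_def by blast
    qed
  qed
qed

end
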